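(* Let $D$ be a diagram of a link $L$, fix $a^*\in A(D)$, and for $a\in A(D)$ let $d_a=\beta_a\beta_{a^*}^{-1}\in Dis(MQ(L))$. Then: (1) the abelian group $Dis(MQ(L))$ is a $\Lambda$-module with scalar multiplication determined by $m\cdot d=d^m$ and $t^n\cdot d=\beta_{a^*}^n d\beta_{a^*}^{-n}$ for all $m,n\in\mathbb Z$, $d\in Dis(MQ(L))$; (2) at every crossing of $D$, in additive notation, $(1-t)\cdot d_{a_1}+t\cdot d_{a_2}-d_{a_3}=0$; (3) the set $\{d_a:a\in A(D)\}$ generates $Dis(MQ(L))$ as a $\Lambda$-module.
   Context: $\Lambda=\mathbb Z[t^{\pm1}]$. Let $L$ be an oriented classical link with diagram $D$; $A(D)$ is the set of arcs of $D$. At a crossing, $a_1$ denotes the overpassing arc, $a_2$ the underpassing arc on the right of $a_1$ (with respect to the orientation of $a_1$), $a_3$ the underpassing arc on the left of $a_1$. A quandle is a set $Q$ with a binary operation $\triangleright$ such that $x\triangleright x=x$, each translation $\beta_y(x)=x\triangleright y$ is a bijection, and $(x\triangleright y)\triangleright z=(x\triangleright z)\triangleright(y\triangleright z)$. It is medial if $(w\triangleright x)\triangleright(y\triangleright z)=(w\triangleright y)\triangleright(x\triangleright z)$ for all $w,x,y,z$. The displacement group $Dis(Q)$ is the subgroup of the automorphism group of $Q$ generated by all $\beta_y\beta_z^{-1}$; for medial $Q$ it is abelian. $MQ(L)$ is the medial quandle generated by $A(D)$ subject to $a_2\triangleright a_1=a_3$ at every crossing; arcs $a\in A(D)$ are regarded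 as elements of $MQ(L)$. Equivalently, with $MG(L)$ the group generated by $A(D)$ subject to (i) $c_1c_2^{-1}c_3=c_3c_2^{-1}c_1$ for conjugates $c_1,c_2,c_3$ of elements of $A(D)$ and (ii) $a_1a_2a_1^{-1}=a_3$ at every crossing, $MQ(L)$ is the set of conjugates of elements of $A(D)$ in $MG(L)$ with $x\triangleright y=yxy^{-1}$. *)

theory Defs
  imports "HOL-Algebra.Algebra" "HOL-Computational_Algebra.Formal_Laurent_Series"
begin

text \<open>A crossing is the triple (a1, a2, a3): a1 the over-arc, a2 the under-arc on the
  right of a1, a3 the under-arc on the left of a1.\<close>

definition diagram :: "'a set \<Rightarrow> ('a \<times> 'a \<times> 'a) set \<Rightarrow> bool" where
  "diagram A C \<longleftrightarrow> finite A \<and> A \<noteq> {} \<and> finite C \<and> C \<subseteq> A \<times> A \<times> A"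

text \<open>Terms in the signature of quandles: Op x y = x \<triangleright> y, LOp x y = the preimage of x
  under the translation by y.\<close>
datatype 'a qterm = Gen 'a | Op "'a qterm" "'a qterm" | LOp "'a qterm" "'a qterm"

fun qgens :: "'a qterm \<Rightarrow> 'a set" where
  "qgens (Gen a) = {a}"
| "qgens (Op x y) = qgens x \<union> qgens y"
| "qgens (LOp x y) = qgens x \<union> qgens y"

definition qterms :: "'a set \<Rightarrow> 'a qterm set" where
  "qterms A = {t. qgens t \<subseteq> A}"

inductive_set mq_rel :: "'a set \<Rightarrow> ('a \<times> 'a \<times> 'a) set \<Rightarrow> ('a qterm \<times> 'a qterm) set"
  for A C where
  refl: "x \<in> qterms A \<Longrightarrow> (x, x) \<in> mq_rel A C"
| sym: "(x, y) \<in> mq_rel A C \<Longrightarrow> (y, x) \<in> mq_rel A C"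
| trans: "(x, y) \<in> mq_rel A C \<Longrightarrow> (y, z) \<in> mq_rel A C \<Longrightarrow> (x, z) \<in> mq_rel A C"
| cong_Op: "(x, x') \<in> mq_rel A C \<Longrightarrow> (y, y') \<in> mq_rel A C \<Longrightarrow> (Op x y, Op x' y') \<in> mq_rel A C"
| cong_LOp: "(x, x') \<in> mq_rel A C \<Longrightarrow> (y, y') \<in> mq_rel A C \<Longrightarrow> (LOp x y, LOp x' y') \<in> mq_rel A C"
| idem: "x \<in> qterms A \<Longrightarrow> (Op x x, x) \<in> mq_rel A C"
| inv1: "x \<in> qterms A \<Longrightarrow> y \<in> qterms A \<Longrightarrow> (Op (LOp x y) y, x) \<in> mq_rel A C"
| inv2: "x \<in> qterms A \<Longrightarrow> y \<in> qterms A \<Longrightarrow> (LOp (Op x y) y, x) \<in> mq_rel A C"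
| distr: "x \<in> qterms A \<Longrightarrow> y \<in> qterms A \<Longrightarrow> z \<in> qterms A \<Longrightarrow>
     (Op (Op x y) z, Op (Op x z) (Op y z)) \<in> mq_rel A C"
| medial: "w \<in> qterms A \<Longrightarrow> x \<in> qterms A \<Longrightarrow> y \<in> qterms A \<Longrightarrow> z \<in> qterms A \<Longrightarrow>
     (Op (Op w x) (Op y z), Op (Op w y) (Op x z)) \<in> mq_rel A C"
| crossing: "(a1, a2, a3) \<in> C \<Longrightarrow> a1 \<in> A \<Longrightarrow> a2 \<in> A \<Longrightarrow> a3 \<in> A \<Longrightarrow>
     (Op (Gen a2) (Gen a1), Gen a3) \<in> mq_rel A C"

definition MQ :: "'a set \<Rightarrow> ('a \<times> 'a \<times> 'a) set \<Rightarrow> 'a qterm set set" where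
  "MQ A C = qterms A // mq_rel A C"

definition MQ_op :: "'a set \<Rightarrow> ('a \<times> 'a \<times> 'a) set \<Rightarrow> 'a qterm set \<Rightarrow> 'a qterm set \<Rightarrow> 'a qterm set" where
  "MQ_op A C U V = mq_rel A C `` {Op x y | x y. x \<in> U \<and> y \<in> V}"

definition arc_elem :: "'a set \<Rightarrow> ('a \<times> 'a \<times> 'a) set \<Rightarrow> 'a \<Rightarrow> 'a qterm set" where
  "arc_elem A C a = mq_rel A C `` {Gen a}"

definition qbeta :: "'q set \<Rightarrow> ('q \<Rightarrow> 'q \<Rightarrow> 'q) \<Rightarrow> 'q \<Rightarrow> ('q \<Rightarrow> 'q)" where
  "qbeta Q op y = (\<lambda>x\<in>Q. op x y)"

definition Dis :: "'q set \<Rightarrow> ('q \<Rightarrow> 'q \<Rightarrow> 'q) \<Rightarrow> ('q \<Rightarrow> 'q) set" where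
  "Dis Q op = generate (BijGroup Q)
     {qbeta Q op y \<otimes>\<^bsub>BijGroup Q\<^esub> inv\<^bsub>BijGroup Q\<^esub> (qbeta Q op z) | y z. y \<in> Q \<and> z \<in> Q}"

text \<open>Laurent polynomials as the formal Laurent series with finitely many nonzero
  coefficients; t is fls_X.\<close>
definition Lambda :: "int fls ring" where
  "Lambda = \<lparr>carrier = {f. finite {n. fls_nth f n \<noteq> 0}}, monoid.mult = (*), one = 1,
             ring.zero = 0, add = (+)\<rparr>"

text \<open>Dis(MQ(L)) as an abelian group in additive notation (group operation = composition),
  equipped with a given scalar multiplication.\<close>
definition DisMod :: "'q set \<Rightarrow> ('q \<Rightarrow> 'q \<Rightarrow> 'q) \<Rightarrow> (int fls \<Rightarrow> ('q \<Rightarrow> 'q) \<Rightarrow> ('q \<Rightarrow> 'q))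
    \<Rightarrow> (int fls, 'q \<Rightarrow> 'q) module" where
  "DisMod Q op sm = \<lparr>carrier = Dis Q op, monoid.mult = monoid.mult (BijGroup Q), one = one (BijGroup Q),
      ring.zero = one (BijGroup Q), add = monoid.mult (BijGroup Q), module.smult = sm\<rparr>"

end

theory Submission
  imports Defs
begin


definition supp :: "int fls \<Rightarrow> int set" where "supp f = {n. fls_nth f n \<noteq> 0}"
definition lmono :: "int \<Rightarrow> int \<Rightarrow> int fls" where "lmono c i = fls_shift (-i) (fls_const c)"

lemma mono_nth[simp]: "fls_nth (lmono c i) n = (if n = i then c else 0)"
  by (simp add: lmono_def)

lemma mono_mult: "lmono c i * lmono d j = lmono (c*d) (i+j)"
  by (simp add: lmono_def fls_times_both_shifted_simp add.commute)

lemma mono_mult_nth: "fls_nth (lmono c i * f) n = c * fls_nth f (n - i)"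
  by (simp add: lmono_def fls_shifted_times_simps)

lemma supp_mono: "supp (lmono c i) \<subseteq> {i}"
  by (auto simp: supp_def)

lemma supp_add: "supp (f+g) \<subseteq> supp f \<union> supp g"
  by (auto simp: supp_def)

lemma supp_mono_mult: "supp (lmono c i * f) \<subseteq> (\<lambda>n. n + i) ` supp f"
  by (auto simp: supp_def mono_mult_nth image_iff intro!: exI[of _ "_ - i"])

lemma Lambda_induct[consumes 1, case_names zero step]:
  assumes "finite (supp f)" "P 0" "\<And>f c i. finite (supp f) \<Longrightarrow> P f \<Longrightarrow> P (f + lmono c i)"
  shows "P f"
proof -
  have "\<forall>f. supp f \<subseteq> S \<longrightarrow> P f" if "finite S" for S
    using that
  proof (induction S rule: finite_induct)
    case empty
    show ?case
    proof (intro allI impI)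
      fix f assume "supp f \<subseteq> {}"
      hence "f = 0" by (auto simp: supp_def fls_eq_iff)
      thus "P f" using assms(2) by simp
    qed
  next
    case (insert i S)
    show ?case
    proof (intro allI impI)
      fix f assume f: "supp f \<subseteq> insert i S"
      define g where "g = f - lmono (fls_nth f i) i"
      have "supp g \<subseteq> S" using f by (auto simp: g_def supp_def)
      hence "P g" "finite (supp g)" using insert by (auto intro: finite_subset)
      hence "P (g + lmono (fls_nth f i) i)" using assms(3) by blast
      thus "P f" by (simp add: g_def)
    qed
  qed
  thus ?thesis using assms(1) by blast
qed

lemma finite_supp_mult:
  assumes "finite (supp f)" "finite (supp g)" shows "finite (supp (f*g))"
  using assms(1)
proof (induction f rule: Lambda_induct)
  case zero then show ?case by (simp add: supp_def)
next
  case (step f c i)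
  have "supp ((f + lmono c i) * g) \<subseteq> supp (f*g) \<union> supp (lmono c i * g)"
    by (metis distrib_right supp_add)
  moreover have "finite (supp (lmono c i * g))"
    using supp_mono_mult[of c i g] assms(2) by (auto intro: finite_subset)
  ultimately show ?case using step by (auto intro: finite_subset)
qed

lemma finite_supp_add: "finite (supp f) \<Longrightarrow> finite (supp g) \<Longrightarrow> finite (supp (f+g))"
  by (meson finite_UnI finite_subset supp_add)

lemma supp_zero[simp]: "supp 0 = {}" by (simp add: supp_def)

lemma supp_uminus[simp]: "supp (-f) = supp f" by (simp add: supp_def)

lemma Lambda_carrier: "carrier Lambda = {f. finite (supp f)}"
  by (simp add: Lambda_def supp_def)

lemma Lambda_simps[simp]: "monoid.mult Lambda = (*)" "one Lambda = 1" "ring.zero Lambda = 0" "ring.add Lambda = (+)"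
  by (simp_all add: Lambda_def)

lemma cring_Lambda: "cring Lambda"
proof (rule cringI)
  show "abelian_group Lambda"
    by (rule abelian_groupI)
       (auto simp: Lambda_carrier finite_supp_add algebra_simps supp_zero intro!: exI[of _ "- _"])
  show "comm_monoid Lambda"
    by (rule comm_monoidI)
       (auto simp: Lambda_carrier finite_supp_mult algebra_simps supp_def[of 1])
qed (simp add: Lambda_carrier algebra_simps)

lemma mono_carrier[simp]: "lmono c i \<in> carrier Lambda"
  using supp_mono by (simp add: Lambda_carrier) (meson finite.emptyI finite_insert finite_subset)




lemma (in group) gcl1[simp]: "a \<in> carrier G \<Longrightarrow> x \<in> carrier G \<Longrightarrow> inv a \<otimes> (a \<otimes> x) = x"
  by (simp add: m_assoc[symmetric])
lemma (in group) gcl2[simp]: "a \<in> carrier G \<Longrightarrow> x \<in> carrier G \<Longrightarrow> a \<otimes> (inv a \<otimes> x) = x"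
  by (simp add: m_assoc[symmetric])

lemma (in group) inv_commute:
  assumes "s \<in> carrier G" "x \<in> carrier G" "s \<otimes> x = x \<otimes> s"
  shows "inv s \<otimes> x = x \<otimes> inv s"
proof -
  have "inv s \<otimes> (s \<otimes> x) \<otimes> inv s = inv s \<otimes> (x \<otimes> s) \<otimes> inv s" using assms(3) by simp
  hence "x \<otimes> inv s = inv s \<otimes> x" using assms(1,2) by (simp add: m_assoc)
  thus ?thesis by simp
qed

lemma (in group) commute_generate:
  assumes "x \<in> carrier G" "S \<subseteq> carrier G" "\<And>s. s \<in> S \<Longrightarrow> s \<otimes> x = x \<otimes> s" "g \<in> generate G S"
  shows "g \<otimes> x = x \<otimes> g"
  using assms(4)
proof (induction rule: generate.induct)
  case one then show ?case using assms by simp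
next
  case (incl h) then show ?case using assms by auto
next
  case (inv h) then show ?case using assms inv_commute by auto
next
  case (eng h1 h2)
  have c: "h1 \<in> carrier G" "h2 \<in> carrier G" using eng generate_in_carrier assms by auto
  have "h1 \<otimes> h2 \<otimes> x = h1 \<otimes> (x \<otimes> h2)" using eng c assms by (simp add: m_assoc)
  also have "\<dots> = x \<otimes> h1 \<otimes> h2" using eng c assms by (simp add: m_assoc[symmetric])
  finally show ?case using c assms by (simp add: m_assoc)
qed

lemma (in group) hom_generate:
  assumes "h \<in> hom G G" "S \<subseteq> carrier G" "\<And>s. s \<in> S \<Longrightarrow> h s \<in> generate G S" "g \<in> generate G S"
  shows "h g \<in> generate G S"
  using assms(4)
proof (induction rule: generate.induct)
  case one
  have "h \<one> = \<one>" using assms(1) by (simp add: hom_one is_group)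
  then show ?case by (simp add: generate.one)
next
  case (incl h) then show ?case using assms by auto
next
  case (inv s)
  have "h (inv s) = inv (h s)" using assms inv by (meson group_hom.hom_inv group_hom.intro group_hom_axioms.intro is_group subsetD)
  then show ?case using assms inv generate_m_inv_closed by auto
next
  case (eng h1 h2)
  have c: "h1 \<in> carrier G" "h2 \<in> carrier G" using eng generate_in_carrier assms by auto
  then show ?case using eng assms(1) by (simp add: hom_mult generate.eng)
qed

lemma (in group) conj_hom: "g \<in> carrier G \<Longrightarrow> (\<lambda>x. g \<otimes> x \<otimes> inv g) \<in> hom G G"
  by (rule homI) (auto simp: m_assoc inv_mult_group)

locale disgrp = group G for G :: "'g monoid" (structure) +
  fixes B :: "'g set" and b :: 'g
  assumes B_sub: "B \<subseteq> carrier G" and b_in: "b \<in> B"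
    and conjB: "u \<in> B \<Longrightarrow> x \<in> B \<Longrightarrow> u \<otimes> x \<otimes> inv u \<in> B"
    and conjB': "u \<in> B \<Longrightarrow> x \<in> B \<Longrightarrow> inv u \<otimes> x \<otimes> u \<in> B"
    and medB: "x \<in> B \<Longrightarrow> y \<in> B \<Longrightarrow> z \<in> B \<Longrightarrow> x \<otimes> inv y \<otimes> z = z \<otimes> inv y \<otimes> x"
begin

definition "gens = {x \<otimes> inv y | x y. x \<in> B \<and> y \<in> B}"
definition "DD = generate G gens"

lemma B_carr[simp]: "u \<in> B \<Longrightarrow> u \<in> carrier G" using B_sub by auto
lemma b_carr[simp]: "b \<in> carrier G" using b_in by simp

lemma gens_sub: "gens \<subseteq> carrier G" by (auto simp: gens_def)

lemma DD_subgroup: "subgroup DD G"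
  unfolding DD_def by (rule generate_is_subgroup[OF gens_sub])

lemma DD_carr[simp]: "x \<in> DD \<Longrightarrow> x \<in> carrier G"
  by (rule subgroup.mem_carrier[OF DD_subgroup])

lemma DD_mult[simp]: "x \<in> DD \<Longrightarrow> y \<in> DD \<Longrightarrow> x \<otimes> y \<in> DD"
  by (rule subgroup.m_closed[OF DD_subgroup])
lemma DD_inv[simp]: "x \<in> DD \<Longrightarrow> inv x \<in> DD"
  by (rule subgroup.m_inv_closed[OF DD_subgroup])
lemma DD_one[simp]: "\<one> \<in> DD"
  by (rule subgroup.one_closed[OF DD_subgroup])
lemma DD_pow[simp]: "x \<in> DD \<Longrightarrow> x [^] (k::int) \<in> DD"
  by (rule subgroup_int_pow_closed[OF DD_subgroup])

lemma gens_DD: "x \<in> B \<Longrightarrow> y \<in> B \<Longrightarrow> x \<otimes> inv y \<in> DD"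
  unfolding DD_def gens_def by (rule generate.incl) (auto intro!: exI)

lemma med_inv: "x \<in> B \<Longrightarrow> y \<in> B \<Longrightarrow> z \<in> B \<Longrightarrow> inv x \<otimes> y \<otimes> inv z = inv z \<otimes> y \<otimes> inv x"
proof -
  assume a: "x \<in> B" "y \<in> B" "z \<in> B"
  have "inv (z \<otimes> inv y \<otimes> x) = inv (x \<otimes> inv y \<otimes> z)" using medB[OF a(3,2,1)] by simp
  thus ?thesis using a by (simp add: inv_mult_group m_assoc)
qed

lemma gens_comm: "g \<in> gens \<Longrightarrow> h \<in> gens \<Longrightarrow> g \<otimes> h = h \<otimes> g"
proof -
  assume "g \<in> gens" "h \<in> gens"
  then obtain a c e f where g: "g = a \<otimes> inv c" "a \<in> B" "c \<in> B" and h: "h = e \<otimes> inv f" "e \<in> B" "f \<in> B"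
    unfolding gens_def by auto
  have "g \<otimes> h = (a \<otimes> inv c \<otimes> e) \<otimes> inv f" using g h by (simp add: m_assoc)
  also have "\<dots> = e \<otimes> (inv c \<otimes> a \<otimes> inv f)" using g h medB[of a c e] by (simp add: m_assoc)
  also have "\<dots> = e \<otimes> (inv f \<otimes> a \<otimes> inv c)" using g h med_inv[of c a f] by simp
  also have "\<dots> = h \<otimes> g" using g h by (simp add: m_assoc)
  finally show ?thesis .
qed

lemma DD_comm1: assumes "g \<in> gens" "z \<in> DD" shows "g \<otimes> z = z \<otimes> g"
proof -
  have g: "g \<in> carrier G" using assms gens_sub by auto
  have "z \<otimes> g = g \<otimes> z"
    by (rule commute_generate[OF g gens_sub]) (use assms gens_comm in \<open>auto simp: DD_def\<close>)
  thus ?thesis by simp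
qed

lemma DD_comm: assumes "x \<in> DD" "y \<in> DD" shows "x \<otimes> y = y \<otimes> x"
proof -
  have y: "y \<in> carrier G" using assms by simp
  show ?thesis
    by (rule commute_generate[OF y gens_sub]) (use assms DD_comm1 in \<open>auto simp: DD_def\<close>)
qed

lemma conj_DD: assumes "u \<in> B" "x \<in> DD" shows "u \<otimes> x \<otimes> inv u \<in> DD"
proof -
  have "s \<in> gens \<Longrightarrow> u \<otimes> s \<otimes> inv u \<in> DD" for s
  proof -
    assume "s \<in> gens"
    then obtain p q where s: "s = p \<otimes> inv q" "p \<in> B" "q \<in> B" unfolding gens_def by auto
    have "u \<otimes> s \<otimes> inv u = (u \<otimes> p \<otimes> inv u) \<otimes> inv (u \<otimes> q \<otimes> inv u)"
      using s assms by (simp add: m_assoc inv_mult_group)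
    thus ?thesis using s assms conjB gens_DD by simp
  qed
  thus ?thesis using hom_generate[OF conj_hom gens_sub] assms unfolding DD_def by simp
qed

lemma conj_DD': assumes "u \<in> B" "x \<in> DD" shows "inv u \<otimes> x \<otimes> u \<in> DD"
proof -
  have "s \<in> gens \<Longrightarrow> inv u \<otimes> s \<otimes> inv (inv u) \<in> DD" for s
  proof -
    assume "s \<in> gens"
    then obtain p q where s: "s = p \<otimes> inv q" "p \<in> B" "q \<in> B" unfolding gens_def by auto
    have "inv u \<otimes> s \<otimes> inv (inv u) = (inv u \<otimes> p \<otimes> u) \<otimes> inv (inv u \<otimes> q \<otimes> u)"
      using s assms by (simp add: m_assoc inv_mult_group)
    thus ?thesis using s assms conjB' gens_DD by simp
  qed
  hence h: "\<And>s. s \<in> gens \<Longrightarrow> (\<lambda>x. inv u \<otimes> x \<otimes> inv (inv u)) s \<in> generate G gens"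
    unfolding DD_def by simp
  have "(\<lambda>x. inv u \<otimes> x \<otimes> inv (inv u)) x \<in> generate G gens"
    by (rule hom_generate[OF conj_hom gens_sub h]) (use assms in \<open>auto simp: DD_def\<close>)
  thus ?thesis using assms by (simp add: DD_def)
qed


definition "K = {g \<in> carrier G. \<forall>x\<in>DD. g \<otimes> x \<otimes> inv g \<in> DD \<and> inv g \<otimes> x \<otimes> g \<in> DD}"

lemma K_subgroup: "subgroup K G"
proof (rule subgroup.intro)
  show "K \<subseteq> carrier G" by (auto simp: K_def)
next
  fix g h assume g: "g \<in> K" and h: "h \<in> K"
  have c: "g \<in> carrier G" "h \<in> carrier G" using g h by (auto simp: K_def)
  show "g \<otimes> h \<in> K"
  proof -
    have "g \<otimes> h \<otimes> x \<otimes> inv (g \<otimes> h) \<in> DD \<and> inv (g \<otimes> h) \<otimes> x \<otimes> (g \<otimes> h) \<in> DD" if x: "x \<in> DD" for x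
    proof -
      have "g \<otimes> h \<otimes> x \<otimes> inv (g \<otimes> h) = g \<otimes> (h \<otimes> x \<otimes> inv h) \<otimes> inv g"
        using c x by (simp add: m_assoc inv_mult_group)
      moreover have "inv (g \<otimes> h) \<otimes> x \<otimes> (g \<otimes> h) = inv h \<otimes> (inv g \<otimes> x \<otimes> g) \<otimes> h"
        using c x by (simp add: m_assoc inv_mult_group)
      ultimately show ?thesis using g h x by (auto simp: K_def)
    qed
    thus ?thesis using c by (auto simp: K_def)
  qed
next
  show "\<one> \<in> K" by (auto simp: K_def)
next
  fix g assume g: "g \<in> K"
  have c: "g \<in> carrier G" using g by (auto simp: K_def)
  show "inv g \<in> K" using g c by (auto simp: K_def)
qed

lemma B_K: "u \<in> B \<Longrightarrow> u \<in> K"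
  using conj_DD conj_DD' by (auto simp: K_def)

lemma conj_eq: assumes "u \<in> B" "x \<in> DD" shows "u \<otimes> x \<otimes> inv u = b \<otimes> x \<otimes> inv b"
proof -
  define g where "g = u \<otimes> inv b"
  define y where "y = b \<otimes> x \<otimes> inv b"
  have g: "g \<in> DD" using gens_DD[OF assms(1) b_in] by (simp add: g_def)
  have y: "y \<in> DD" using conj_DD[OF b_in assms(2)] by (simp add: y_def)
  have "u \<otimes> x \<otimes> inv u = g \<otimes> y \<otimes> inv g"
    using assms by (simp add: g_def y_def m_assoc inv_mult_group)
  also have "\<dots> = y \<otimes> g \<otimes> inv g" using DD_comm[OF g y] by simp
  also have "\<dots> = y" using g y by (simp add: m_assoc)
  finally show ?thesis by (simp add: y_def)
qed

lemma conj_eq': assumes "u \<in> B" "x \<in> DD" shows "inv u \<otimes> x \<otimes> u = inv b \<otimes> x \<otimes> b"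
proof -
  define y where "y = inv u \<otimes> x \<otimes> u"
  have y: "y \<in> DD" using conj_DD'[OF assms] by (simp add: y_def)
  have "u \<otimes> y \<otimes> inv u = b \<otimes> y \<otimes> inv b" by (rule conj_eq[OF assms(1) y])
  hence "x = b \<otimes> y \<otimes> inv b" using assms by (simp add: y_def m_assoc)
  hence "inv b \<otimes> x \<otimes> b = y" using y by (simp add: m_assoc)
  thus ?thesis by (simp add: y_def)
qed

definition ph :: "int \<Rightarrow> 'g \<Rightarrow> 'g" where "ph n x = (b [^] n) \<otimes> x \<otimes> inv (b [^] n)"

lemma bn_K: "b [^] (n::int) \<in> K"
  using subgroup_int_pow_closed[OF K_subgroup B_K[OF b_in]] .

lemma ph_DD[simp]: "x \<in> DD \<Longrightarrow> ph n x \<in> DD"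
  using bn_K by (auto simp: K_def ph_def)

lemma ph_carr[simp]: "x \<in> carrier G \<Longrightarrow> ph n x \<in> carrier G"
  by (simp add: ph_def)

lemma ph_add: "x \<in> carrier G \<Longrightarrow> ph (m + n) x = ph m (ph n x)"
  by (simp add: ph_def int_pow_mult m_assoc inv_mult_group)

lemma ph_0[simp]: "x \<in> carrier G \<Longrightarrow> ph 0 x = x"
  by (simp add: ph_def)

lemma ph_1: "x \<in> carrier G \<Longrightarrow> ph 1 x = b \<otimes> x \<otimes> inv b"
  by (simp add: ph_def)

lemma ph_m1: "x \<in> carrier G \<Longrightarrow> ph (-1) x = inv b \<otimes> x \<otimes> b"
  by (simp add: ph_def int_pow_neg)

lemma ph_mult: "x \<in> carrier G \<Longrightarrow> y \<in> carrier G \<Longrightarrow> ph n (x \<otimes> y) = ph n x \<otimes> ph n y"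
  by (simp add: ph_def m_assoc)

lemma ph_pow: "x \<in> carrier G \<Longrightarrow> ph n (x [^] (k::int)) = ph n x [^] k"
  unfolding ph_def
  using hom_int_pow[OF conj_hom[of "b [^] n"], of x k] by (simp add: is_group)

lemma ph_one[simp]: "ph n \<one> = \<one>"
  by (simp add: ph_def)

definition "Dg = \<lparr>carrier = DD, monoid.mult = monoid.mult G, one = one G\<rparr>"

lemma Dg_simps[simp]: "carrier Dg = DD" "monoid.mult Dg = monoid.mult G" "one Dg = one G"
  by (simp_all add: Dg_def)

lemma Dg_cg: "comm_group Dg"
proof (rule comm_groupI)
  fix x y assume "x \<in> carrier Dg" "y \<in> carrier Dg"
  thus "x \<otimes>\<^bsub>Dg\<^esub> y = y \<otimes>\<^bsub>Dg\<^esub> x" using DD_comm by simp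
next
  fix x assume "x \<in> carrier Dg"
  hence "inv x \<in> carrier Dg" "inv x \<otimes>\<^bsub>Dg\<^esub> x = \<one>\<^bsub>Dg\<^esub>" by simp_all
  thus "\<exists>y\<in>carrier Dg. y \<otimes>\<^bsub>Dg\<^esub> x = \<one>\<^bsub>Dg\<^esub>" by auto
qed (simp_all add: m_assoc)

definition sm :: "int fls \<Rightarrow> 'g \<Rightarrow> 'g" where
  "sm f x = finprod Dg (\<lambda>n. ph n x [^] fls_nth f n) (supp f)"

lemma term_DD[simp]: "x \<in> DD \<Longrightarrow> ph n x [^] (k::int) \<in> DD"
  by simp

lemma sm_expand:
  assumes "finite T" "supp f \<subseteq> T" "x \<in> DD"
  shows "sm f x = finprod Dg (\<lambda>n. ph n x [^] fls_nth f n) T"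
proof -
  interpret D: comm_group Dg by (rule Dg_cg)
  show ?thesis unfolding sm_def
    by (rule D.finprod_mono_neutral_cong_right[symmetric]) (use assms in \<open>auto simp: supp_def\<close>)
qed

lemma sm_closed[simp]: "x \<in> DD \<Longrightarrow> sm f x \<in> DD"
proof -
  interpret D: comm_group Dg by (rule Dg_cg)
  assume "x \<in> DD" thus ?thesis unfolding sm_def
    using D.finprod_closed[of "\<lambda>n. ph n x [^] fls_nth f n" "supp f"] by auto
qed

lemma sm_add:
  assumes "finite (supp f)" "finite (supp g)" "x \<in> DD"
  shows "sm (f+g) x = sm f x \<otimes> sm g x"
proof -
  interpret D: comm_group Dg by (rule Dg_cg)
  define T where "T = supp f \<union> supp g"
  have T: "finite T" "supp f \<subseteq> T" "supp g \<subseteq> T" "supp (f+g) \<subseteq> T"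
    using assms supp_add by (auto simp: T_def)
  have "sm (f+g) x = finprod Dg (\<lambda>n. ph n x [^] fls_nth (f+g) n) T"
    by (rule sm_expand[OF T(1,4) assms(3)])
  also have "\<dots> = finprod Dg (\<lambda>n. ph n x [^] fls_nth f n \<otimes>\<^bsub>Dg\<^esub> ph n x [^] fls_nth g n) T"
    by (rule D.finprod_cong) (use assms in \<open>auto simp: int_pow_mult Pi_def\<close>)
  also have "\<dots> = finprod Dg (\<lambda>n. ph n x [^] fls_nth f n) T \<otimes>\<^bsub>Dg\<^esub> finprod Dg (\<lambda>n. ph n x [^] fls_nth g n) T"
    by (rule D.finprod_multf) (use assms in \<open>auto simp: Pi_def\<close>)
  also have "\<dots> = sm f x \<otimes> sm g x"
    using sm_expand[OF T(1,2) assms(3)] sm_expand[OF T(1,3) assms(3)] by simp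
  finally show ?thesis .
qed

lemma sm_hom:
  assumes "x \<in> DD" "y \<in> DD"
  shows "sm f (x \<otimes> y) = sm f x \<otimes> sm f y"
proof -
  interpret D: comm_group Dg by (rule Dg_cg)
  have "sm f (x \<otimes> y) = finprod Dg (\<lambda>n. ph n x [^] fls_nth f n \<otimes>\<^bsub>Dg\<^esub> ph n y [^] fls_nth f n) (supp f)"
    unfolding sm_def
    by (rule D.finprod_cong) (use assms in \<open>auto simp: ph_mult Pi_def int_pow_mult_distrib DD_comm\<close>)
  also have "\<dots> = sm f x \<otimes> sm f y"
  proof (cases "finite (supp f)")
    case True thus ?thesis by (subst D.finprod_multf) (use assms in \<open>auto simp: Pi_def sm_def\<close>)
  next
    case False thus ?thesis by (simp add: finprod_def sm_def)
  qed
  finally show ?thesis .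
qed

lemma sm_mono: "x \<in> DD \<Longrightarrow> sm (lmono c i) x = ph i x [^] c"
proof -
  interpret D: comm_group Dg by (rule Dg_cg)
  assume x: "x \<in> DD"
  have "sm (lmono c i) x = finprod Dg (\<lambda>n. ph n x [^] fls_nth (lmono c i) n) {i}"
    by (rule sm_expand[OF _ supp_mono x]) simp
  also have "\<dots> = ph i x [^] c" using x by simp
  finally show ?thesis .
qed

lemma sm_zero_f[simp]: "sm 0 x = \<one>"
proof -
  interpret D: comm_group Dg by (rule Dg_cg)
  show ?thesis by (simp add: sm_def)
qed

lemma sm_one_x: "sm f \<one> = \<one>"
proof -
  interpret D: comm_group Dg by (rule Dg_cg)
  have "finprod Dg (\<lambda>n. ph n \<one> [^] fls_nth f n) (supp f) = \<one>\<^bsub>Dg\<^esub>"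
    by (rule D.finprod_one_eqI) simp
  thus ?thesis by (simp add: sm_def)
qed

lemma sm_mono_mono: "x \<in> DD \<Longrightarrow> sm (lmono c i * lmono d j) x = sm (lmono c i) (sm (lmono d j) x)"
  by (simp add: mono_mult sm_mono ph_pow ph_add int_pow_pow mult.commute)

lemma fin_mono[simp]: "finite (supp (lmono c i))"
  using supp_mono[of c i] by (rule finite_subset) simp

lemma sm_assoc_mono:
  assumes "finite (supp g)" "x \<in> DD"
  shows "sm (lmono c i * g) x = sm (lmono c i) (sm g x)"
  using assms(1)
proof (induction g rule: Lambda_induct)
  case zero then show ?case by (simp add: sm_one_x)
next
  case (step g d j)
  have "sm (lmono c i * (g + lmono d j)) x = sm (lmono c i * g + lmono c i * lmono d j) x"
    by (simp add: distrib_left)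
  also have "\<dots> = sm (lmono c i * g) x \<otimes> sm (lmono c i * lmono d j) x"
    by (rule sm_add) (use step assms in \<open>auto intro: finite_supp_mult\<close>)
  also have "\<dots> = sm (lmono c i) (sm g x \<otimes> sm (lmono d j) x)"
    using step assms by (simp add: sm_mono_mono sm_hom)
  also have "\<dots> = sm (lmono c i) (sm (g + lmono d j) x)"
    using step assms by (simp add: sm_add)
  finally show ?case .
qed

lemma sm_assoc:
  assumes "finite (supp f)" "finite (supp g)" "x \<in> DD"
  shows "sm (f * g) x = sm f (sm g x)"
  using assms(1)
proof (induction f rule: Lambda_induct)
  case zero then show ?case by simp
next
  case (step f c i)
  have "sm ((f + lmono c i) * g) x = sm (f * g + lmono c i * g) x"
    by (simp add: distrib_right)
  also have "\<dots> = sm (f * g) x \<otimes> sm (lmono c i * g) x"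
    by (rule sm_add) (use step assms in \<open>auto intro: finite_supp_mult\<close>)
  also have "\<dots> = sm (f + lmono c i) (sm g x)"
    using step assms by (simp add: sm_assoc_mono sm_add)
  finally show ?case .
qed

lemma one_mono: "(1::int fls) = lmono 1 0"
  by (simp add: fls_eq_iff)

lemma sm_1: "x \<in> DD \<Longrightarrow> sm 1 x = x"
  by (simp add: one_mono sm_mono)

end



context disgrp begin

definition "DMod = \<lparr>carrier = DD, monoid.mult = monoid.mult G, one = one G,
      ring.zero = one G, add = monoid.mult G, module.smult = sm\<rparr>"

lemma DMod_simps[simp]: "carrier DMod = DD" "ring.zero DMod = one G" "ring.add DMod = monoid.mult G"
   "module.smult DMod = sm"
  by (simp_all add: DMod_def)

lemma abelian_DMod: "abelian_group DMod"
proof (rule abelian_groupI)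
  fix x y assume "x \<in> carrier DMod" "y \<in> carrier DMod"
  thus "x \<oplus>\<^bsub>DMod\<^esub> y = y \<oplus>\<^bsub>DMod\<^esub> x" using DD_comm by simp
next
  fix x assume x: "x \<in> carrier DMod"
  hence "inv x \<in> carrier DMod" "inv x \<oplus>\<^bsub>DMod\<^esub> x = \<zero>\<^bsub>DMod\<^esub>" by simp_all
  thus "\<exists>y\<in>carrier DMod. y \<oplus>\<^bsub>DMod\<^esub> x = \<zero>\<^bsub>DMod\<^esub>" by auto
qed (simp_all add: m_assoc)

lemma module_DMod: "module Lambda DMod"
proof (rule moduleI[OF cring_Lambda abelian_DMod])
  fix a b x assume "a \<in> carrier Lambda" "b \<in> carrier Lambda" "x \<in> carrier DMod"
  thus "(a \<oplus>\<^bsub>Lambda\<^esub> b) \<odot>\<^bsub>DMod\<^esub> x = a \<odot>\<^bsub>DMod\<^esub> x \<oplus>\<^bsub>DMod\<^esub> b \<odot>\<^bsub>DMod\<^esub> x"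
    "(a \<otimes>\<^bsub>Lambda\<^esub> b) \<odot>\<^bsub>DMod\<^esub> x = a \<odot>\<^bsub>DMod\<^esub> (b \<odot>\<^bsub>DMod\<^esub> x)"
    by (simp_all add: Lambda_carrier sm_add sm_assoc)
next
  fix a x y assume "a \<in> carrier Lambda" "x \<in> carrier DMod" "y \<in> carrier DMod"
  thus "a \<odot>\<^bsub>DMod\<^esub> (x \<oplus>\<^bsub>DMod\<^esub> y) = a \<odot>\<^bsub>DMod\<^esub> x \<oplus>\<^bsub>DMod\<^esub> a \<odot>\<^bsub>DMod\<^esub> y"
    by (simp add: sm_hom)
qed (simp_all add: sm_1)

lemma DMod_ainv: "x \<in> DD \<Longrightarrow> \<ominus>\<^bsub>DMod\<^esub> x = inv x"
  by (rule abelian_group.minus_equality[OF abelian_DMod]) simp_all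

lemma DMod_minus: "x \<in> DD \<Longrightarrow> y \<in> DD \<Longrightarrow> x \<ominus>\<^bsub>DMod\<^esub> y = x \<otimes> inv y"
  by (simp add: a_minus_def DMod_ainv)

definition dd :: "'g \<Rightarrow> 'g" where "dd u = u \<otimes> inv b"

lemma dd_DD[simp]: "u \<in> B \<Longrightarrow> dd u \<in> DD"
  unfolding dd_def by (rule gens_DD[OF _ b_in])

lemma X_mono: "(fls_X :: int fls) = lmono 1 1"
  by (simp add: fls_eq_iff)

lemma oneX_mono: "(1 - fls_X :: int fls) = lmono 1 0 + lmono (-1) 1"
  by (simp add: fls_eq_iff)

lemma sm_X: "x \<in> DD \<Longrightarrow> sm fls_X x = ph 1 x"
  by (simp add: X_mono sm_mono)

lemma sm_oneX: "x \<in> DD \<Longrightarrow> sm (1 - fls_X) x = x \<otimes> inv (ph 1 x)"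
  by (simp add: oneX_mono sm_add sm_mono int_pow_neg)

lemma crossing_abs:
  assumes u1: "u1 \<in> B" and u2: "u2 \<in> B" and u3: "u3 = u1 \<otimes> u2 \<otimes> inv u1"
  shows "(sm (1 - fls_X) (dd u1) \<oplus>\<^bsub>DMod\<^esub> sm fls_X (dd u2)) \<ominus>\<^bsub>DMod\<^esub> dd u3 = \<zero>\<^bsub>DMod\<^esub>"
proof -
  have c: "u1 \<in> carrier G" "u2 \<in> carrier G" using u1 u2 by auto
  have u3B: "u3 \<in> B" using conjB[OF u1 u2] u3 by simp
  have k0: "inv u1 \<otimes> (u2 \<otimes> inv u1) \<otimes> u1 = inv b \<otimes> (u2 \<otimes> inv u1) \<otimes> b"
    by (rule conj_eq'[OF u1 gens_DD[OF u2 u1]])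
  hence k1: "inv u1 \<otimes> u2 = inv b \<otimes> (u2 \<otimes> (inv u1 \<otimes> b))" using c by (simp add: m_assoc)
  have k2: "b \<otimes> (inv u1 \<otimes> (u2 \<otimes> z)) = u2 \<otimes> (inv u1 \<otimes> (b \<otimes> z))" if z: "z \<in> carrier G" for z
  proof -
    have "b \<otimes> (inv u1 \<otimes> (u2 \<otimes> z)) = b \<otimes> ((inv u1 \<otimes> u2) \<otimes> z)" using c z by (simp add: m_assoc)
    also have "\<dots> = u2 \<otimes> (inv u1 \<otimes> (b \<otimes> z))" using c z by (simp add: k1 m_assoc)
    finally show ?thesis .
  qed
  have eq: "dd u1 \<otimes> inv (ph 1 (dd u1)) \<otimes> ph 1 (dd u2) = dd u3"
  proof -
    have "dd u1 \<otimes> inv (ph 1 (dd u1)) \<otimes> ph 1 (dd u2)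
        = u1 \<otimes> (b \<otimes> (inv u1 \<otimes> (u2 \<otimes> (inv b \<otimes> inv b))))"
      using c by (simp add: dd_def ph_1 m_assoc inv_mult_group)
    also have "\<dots> = u1 \<otimes> (u2 \<otimes> (inv u1 \<otimes> (b \<otimes> (inv b \<otimes> inv b))))"
      using c by (simp add: k2)
    also have "\<dots> = dd u3" using c by (simp add: dd_def u3 m_assoc)
    finally show ?thesis .
  qed
  show ?thesis
    using u1 u2 u3B by (simp add: sm_oneX sm_X DMod_minus eq[symmetric])
qed

lemma submod_facts:
  assumes N: "submodule N Lambda DMod"
  shows "N \<subseteq> DD" "\<one> \<in> N" "\<And>x y. x \<in> N \<Longrightarrow> y \<in> N \<Longrightarrow> x \<otimes> y \<in> N"
    "\<And>x. x \<in> N \<Longrightarrow> inv x \<in> N" "\<And>x. x \<in> N \<Longrightarrow> ph 1 x \<in> N" "\<And>x. x \<in> N \<Longrightarrow> ph (-1) x \<in> N"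
proof -
  interpret M: module Lambda DMod by (rule module_DMod)
  have E: "N \<subseteq> carrier DMod" "\<And>a. a \<in> N \<Longrightarrow> \<ominus>\<^bsub>DMod\<^esub> a \<in> N"
     "\<And>a b. a \<in> carrier Lambda \<Longrightarrow> b \<in> N \<Longrightarrow> a \<odot>\<^bsub>DMod\<^esub> b \<in> N"
     "\<And>a b. a \<in> N \<Longrightarrow> b \<in> N \<Longrightarrow> a \<oplus>\<^bsub>DMod\<^esub> b \<in> N"
    using M.submoduleE[OF N] by auto
  show s: "N \<subseteq> DD" using E(1) by simp
  show "\<one> \<in> N"
    using subgroup.one_closed[OF submodule.axioms(1)[OF N]] by simp
  show "\<And>x y. x \<in> N \<Longrightarrow> y \<in> N \<Longrightarrow> x \<otimes> y \<in> N" using E(4) by simp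
  show "\<And>x. x \<in> N \<Longrightarrow> inv x \<in> N"
  proof -
    fix x assume x: "x \<in> N"
    hence "x \<in> DD" using s by auto
    thus "inv x \<in> N" using E(2)[OF x] DMod_ainv by simp
  qed
  show "\<And>x. x \<in> N \<Longrightarrow> ph 1 x \<in> N"
  proof -
    fix x assume x: "x \<in> N"
    have "sm (lmono 1 1) x \<in> N" using E(3)[OF mono_carrier x] by simp
    thus "ph 1 x \<in> N" using x s by (auto simp: sm_mono)
  qed
  show "\<And>x. x \<in> N \<Longrightarrow> ph (-1) x \<in> N"
  proof -
    fix x assume x: "x \<in> N"
    have "sm (lmono 1 (-1)) x \<in> N" using E(3)[OF mono_carrier x] by simp
    thus "ph (-1) x \<in> N" using x s by (auto simp: sm_mono)
  qed
qed

lemma dd_conj: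
  assumes N: "submodule N Lambda DMod" and u: "u \<in> B" and v: "v \<in> B"
    and du: "dd u \<in> N" and dv: "dd v \<in> N"
  shows "dd (v \<otimes> u \<otimes> inv v) \<in> N" "dd (inv v \<otimes> u \<otimes> v) \<in> N"
proof -
  note F = submod_facts[OF N]
  have c: "u \<in> carrier G" "v \<in> carrier G" using u v by auto
  have e1: "v \<otimes> dd u \<otimes> inv v = ph 1 (dd u)" using conj_eq[OF v dd_DD[OF u]] dd_DD[OF u] by (simp add: ph_1)
  have "dd (v \<otimes> u \<otimes> inv v) = (v \<otimes> dd u \<otimes> inv v) \<otimes> (dd v \<otimes> ph 1 (inv (dd v)))"
    using c by (simp add: dd_def ph_1 m_assoc inv_mult_group)
  also have "\<dots> = ph 1 (dd u) \<otimes> (dd v \<otimes> ph 1 (inv (dd v)))" by (simp add: e1)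
  finally show "dd (v \<otimes> u \<otimes> inv v) \<in> N" using F du dv by simp
  have e2: "inv v \<otimes> dd u \<otimes> v = ph (-1) (dd u)" using conj_eq'[OF v dd_DD[OF u]] dd_DD[OF u] by (simp add: ph_m1)
  have "dd (inv v \<otimes> u \<otimes> v) = (inv v \<otimes> dd u \<otimes> v) \<otimes> (inv (ph (-1) (dd v)) \<otimes> dd v)"
    using c by (simp add: dd_def ph_m1 m_assoc inv_mult_group)
  also have "\<dots> = ph (-1) (dd u) \<otimes> (inv (ph (-1) (dd v)) \<otimes> dd v)" by (simp add: e2)
  finally show "dd (inv v \<otimes> u \<otimes> v) \<in> N" using F du dv by simp
qed

lemma gen_N:
  assumes N: "submodule N Lambda DMod" and all: "\<And>u. u \<in> B \<Longrightarrow> dd u \<in> N"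
  shows "DD \<subseteq> N"
proof
  note F = submod_facts[OF N]
  fix x assume "x \<in> DD"
  thus "x \<in> N" unfolding DD_def
  proof (induction rule: generate.induct)
    case one then show ?case using F by simp
  next
    case (incl h)
    then obtain p q where h: "h = p \<otimes> inv q" "p \<in> B" "q \<in> B" by (auto simp: gens_def)
    have "h = dd p \<otimes> inv (dd q)" using h by (simp add: dd_def inv_mult_group m_assoc)
    thus ?case using F all h by simp
  next
    case (inv h)
    then obtain p q where h: "h = p \<otimes> inv q" "p \<in> B" "q \<in> B" by (auto simp: gens_def)
    have "inv h = dd q \<otimes> inv (dd p)" using h by (simp add: dd_def inv_mult_group m_assoc)
    thus ?case using F all h by simp
  next
    case (eng h1 h2) then show ?case using F by simp
  qed
qed

end



lemma qterms_simps[simp]: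
  "Gen a \<in> qterms A \<longleftrightarrow> a \<in> A" "Op x y \<in> qterms A \<longleftrightarrow> x \<in> qterms A \<and> y \<in> qterms A"
  "LOp x y \<in> qterms A \<longleftrightarrow> x \<in> qterms A \<and> y \<in> qterms A"
  by (auto simp: qterms_def)

lemma mq_rel_qterms: "(x,y) \<in> mq_rel A C \<Longrightarrow> x \<in> qterms A \<and> y \<in> qterms A"
  by (induction rule: mq_rel.induct) auto

lemma equiv_mq: "equiv (qterms A) (mq_rel A C)"
proof (rule equivI)
  show "mq_rel A C \<subseteq> qterms A \<times> qterms A" using mq_rel_qterms by auto
  show "refl_on (qterms A) (mq_rel A C)" by (rule refl_onI) (rule mq_rel.refl)
  show "sym (mq_rel A C)" by (rule symI) (rule mq_rel.sym)
  show "trans (mq_rel A C)" by (rule transI) (rule mq_rel.trans)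
qed

lemma cls_eq: "x \<in> qterms A \<Longrightarrow> y \<in> qterms A \<Longrightarrow>
  mq_rel A C `` {x} = mq_rel A C `` {y} \<longleftrightarrow> (x, y) \<in> mq_rel A C"
  by (rule eq_equiv_class_iff[OF equiv_mq])

lemma MQ_op_cls:
  assumes "x \<in> qterms A" "y \<in> qterms A"
  shows "MQ_op A C (mq_rel A C `` {x}) (mq_rel A C `` {y}) = mq_rel A C `` {Op x y}"
proof
  show "MQ_op A C (mq_rel A C `` {x}) (mq_rel A C `` {y}) \<subseteq> mq_rel A C `` {Op x y}"
  proof
    fix z assume "z \<in> MQ_op A C (mq_rel A C `` {x}) (mq_rel A C `` {y})"
    then obtain x' y' where r: "(x,x') \<in> mq_rel A C" "(y,y') \<in> mq_rel A C" "(Op x' y', z) \<in> mq_rel A C"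
      unfolding MQ_op_def by auto
    have "(Op x y, Op x' y') \<in> mq_rel A C" by (rule mq_rel.cong_Op[OF r(1) r(2)])
    thus "z \<in> mq_rel A C `` {Op x y}" using r(3) by (auto intro: mq_rel.trans)
  qed
next
  show "mq_rel A C `` {Op x y} \<subseteq> MQ_op A C (mq_rel A C `` {x}) (mq_rel A C `` {y})"
  proof
    fix z assume z: "z \<in> mq_rel A C `` {Op x y}"
    have "(x,x) \<in> mq_rel A C" "(y,y) \<in> mq_rel A C" using assms by (auto intro: mq_rel.refl)
    thus "z \<in> MQ_op A C (mq_rel A C `` {x}) (mq_rel A C `` {y})"
      using z unfolding MQ_op_def by auto
  qed
qed

lemma MQ_iff: "U \<in> MQ A C \<longleftrightarrow> (\<exists>x\<in>qterms A. U = mq_rel A C `` {x})"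
  by (auto simp: MQ_def quotient_def)

lemma cls_MQ[simp]: "x \<in> qterms A \<Longrightarrow> mq_rel A C `` {x} \<in> MQ A C"
  by (auto simp: MQ_iff)

lemma MQ_closed: "U \<in> MQ A C \<Longrightarrow> V \<in> MQ A C \<Longrightarrow> MQ_op A C U V \<in> MQ A C"
  by (auto simp: MQ_iff MQ_op_cls)

lemma MQ_distr:
  assumes "U \<in> MQ A C" "V \<in> MQ A C" "W \<in> MQ A C"
  shows "MQ_op A C (MQ_op A C U V) W = MQ_op A C (MQ_op A C U W) (MQ_op A C V W)"
proof -
  obtain x y z where "x \<in> qterms A" "y \<in> qterms A" "z \<in> qterms A"
    "U = mq_rel A C `` {x}" "V = mq_rel A C `` {y}" "W = mq_rel A C `` {z}"
    using assms by (auto simp: MQ_iff)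
  thus ?thesis by (simp add: MQ_op_cls cls_eq mq_rel.distr)
qed

lemma MQ_medial:
  assumes "U \<in> MQ A C" "V \<in> MQ A C" "W \<in> MQ A C" "Z \<in> MQ A C"
  shows "MQ_op A C (MQ_op A C U V) (MQ_op A C W Z) = MQ_op A C (MQ_op A C U W) (MQ_op A C V Z)"
proof -
  obtain x y z w where "x \<in> qterms A" "y \<in> qterms A" "z \<in> qterms A" "w \<in> qterms A"
    "U = mq_rel A C `` {x}" "V = mq_rel A C `` {y}" "W = mq_rel A C `` {z}" "Z = mq_rel A C `` {w}"
    using assms by (auto simp: MQ_iff)
  thus ?thesis by (simp add: MQ_op_cls cls_eq mq_rel.medial)
qed

lemma MQ_LOp:
  assumes "x \<in> qterms A" "y \<in> qterms A"
  shows "MQ_op A C (mq_rel A C `` {LOp x y}) (mq_rel A C `` {y}) = mq_rel A C `` {x}"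
  using assms by (simp add: MQ_op_cls cls_eq mq_rel.inv1)

lemma MQ_bij: assumes "V \<in> MQ A C" shows "bij_betw (\<lambda>U. MQ_op A C U V) (MQ A C) (MQ A C)"
proof -
  obtain y where y: "y \<in> qterms A" "V = mq_rel A C `` {y}" using assms by (auto simp: MQ_iff)
  show ?thesis
  proof (rule bij_betw_imageI)
    show "inj_on (\<lambda>U. MQ_op A C U V) (MQ A C)"
    proof (rule inj_onI)
      fix U U' assume "U \<in> MQ A C" "U' \<in> MQ A C" "MQ_op A C U V = MQ_op A C U' V"
      then obtain x x' where x: "x \<in> qterms A" "x' \<in> qterms A" "U = mq_rel A C `` {x}" "U' = mq_rel A C `` {x'}"
        and e: "MQ_op A C U V = MQ_op A C U' V" by (auto simp: MQ_iff)
      have "(Op x y, Op x' y) \<in> mq_rel A C" using e x y by (simp add: MQ_op_cls cls_eq)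
      hence h2: "(LOp (Op x y) y, LOp (Op x' y) y) \<in> mq_rel A C"
        using y by (simp add: mq_rel.cong_LOp mq_rel.refl)
      have h1: "(x, LOp (Op x y) y) \<in> mq_rel A C" using x y by (simp add: mq_rel.sym mq_rel.inv2)
      have h3: "(LOp (Op x' y) y, x') \<in> mq_rel A C" using x y by (simp add: mq_rel.inv2)
      have "(x, x') \<in> mq_rel A C" by (rule mq_rel.trans[OF mq_rel.trans[OF h1 h2] h3])
      thus "U = U'" using x by (simp add: cls_eq)
    qed
    show "(\<lambda>U. MQ_op A C U V) ` MQ A C = MQ A C"
    proof
      show "(\<lambda>U. MQ_op A C U V) ` MQ A C \<subseteq> MQ A C" using MQ_closed assms by auto
      show "MQ A C \<subseteq> (\<lambda>U. MQ_op A C U V) ` MQ A C"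
      proof
        fix W assume "W \<in> MQ A C"
        then obtain z where z: "z \<in> qterms A" "W = mq_rel A C `` {z}" by (auto simp: MQ_iff)
        have "W = MQ_op A C (mq_rel A C `` {LOp z y}) V" using z y by (simp add: MQ_LOp)
        moreover have "mq_rel A C `` {LOp z y} \<in> MQ A C" using z y by simp
        ultimately show "W \<in> (\<lambda>U. MQ_op A C U V) ` MQ A C" by auto
      qed
    qed
  qed
qed

locale medq =
  fixes Q :: "'q set" and op :: "'q \<Rightarrow> 'q \<Rightarrow> 'q"
  assumes closed: "x \<in> Q \<Longrightarrow> y \<in> Q \<Longrightarrow> op x y \<in> Q"
    and rbij: "y \<in> Q \<Longrightarrow> bij_betw (\<lambda>x. op x y) Q Q"
    and distr: "x \<in> Q \<Longrightarrow> y \<in> Q \<Longrightarrow> z \<in> Q \<Longrightarrow> op (op x y) z = op (op x z) (op y z)"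
    and medial: "w \<in> Q \<Longrightarrow> x \<in> Q \<Longrightarrow> y \<in> Q \<Longrightarrow> z \<in> Q \<Longrightarrow> op (op w x) (op y z) = op (op w y) (op x z)"
begin

lemma beta_Bij: "y \<in> Q \<Longrightarrow> qbeta Q op y \<in> Bij Q"
  by (simp add: Bij_def qbeta_def rbij)

lemma BG_mult: "f \<in> Bij Q \<Longrightarrow> g \<in> Bij Q \<Longrightarrow> f \<otimes>\<^bsub>BijGroup Q\<^esub> g = compose Q f g"
  by (simp add: BijGroup_def)

lemma beta_mult: "y \<in> Q \<Longrightarrow> z \<in> Q \<Longrightarrow>
   qbeta Q op y \<otimes>\<^bsub>BijGroup Q\<^esub> qbeta Q op z = qbeta Q op (op z y) \<otimes>\<^bsub>BijGroup Q\<^esub> qbeta Q op y"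
proof -
  assume y: "y \<in> Q" and z: "z \<in> Q"
  have "compose Q (qbeta Q op y) (qbeta Q op z) = compose Q (qbeta Q op (op z y)) (qbeta Q op y)"
  proof (rule ext)
    fix x show "compose Q (qbeta Q op y) (qbeta Q op z) x = compose Q (qbeta Q op (op z y)) (qbeta Q op y) x"
      by (cases "x \<in> Q") (simp_all add: compose_def qbeta_def closed y z distr[of x z y])
  qed
  thus ?thesis using y z by (simp add: BG_mult beta_Bij closed)
qed

lemma beta_med: "x \<in> Q \<Longrightarrow> y \<in> Q \<Longrightarrow> z \<in> Q \<Longrightarrow>
   qbeta Q op (op y z) \<otimes>\<^bsub>BijGroup Q\<^esub> qbeta Q op x = qbeta Q op (op x z) \<otimes>\<^bsub>BijGroup Q\<^esub> qbeta Q op y"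
proof -
  assume x: "x \<in> Q" and y: "y \<in> Q" and z: "z \<in> Q"
  have "compose Q (qbeta Q op (op y z)) (qbeta Q op x) = compose Q (qbeta Q op (op x z)) (qbeta Q op y)"
  proof (rule ext)
    fix w show "compose Q (qbeta Q op (op y z)) (qbeta Q op x) w = compose Q (qbeta Q op (op x z)) (qbeta Q op y) w"
      by (cases "w \<in> Q") (simp_all add: compose_def qbeta_def closed x y z medial[of w x y z])
  qed
  thus ?thesis using x y z by (simp add: BG_mult beta_Bij closed)
qed

lemma group_BG: "group (BijGroup Q)" by (rule group_BijGroup)

lemma beta_carr: "y \<in> Q \<Longrightarrow> qbeta Q op y \<in> carrier (BijGroup Q)"
  by (simp add: beta_Bij BijGroup_def)

lemma beta_conj: "y \<in> Q \<Longrightarrow> z \<in> Q \<Longrightarrow>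
  qbeta Q op y \<otimes>\<^bsub>BijGroup Q\<^esub> qbeta Q op z \<otimes>\<^bsub>BijGroup Q\<^esub> inv\<^bsub>BijGroup Q\<^esub> qbeta Q op y = qbeta Q op (op z y)"
proof -
  interpret G: group "BijGroup Q" by (rule group_BG)
  assume y: "y \<in> Q" and z: "z \<in> Q"
  show ?thesis using beta_mult[OF y z] beta_carr y z closed by (simp add: G.m_assoc)
qed

lemma beta_conj': assumes u: "u \<in> Q" and x: "x \<in> Q"
  shows "inv\<^bsub>BijGroup Q\<^esub> qbeta Q op u \<otimes>\<^bsub>BijGroup Q\<^esub> qbeta Q op x \<otimes>\<^bsub>BijGroup Q\<^esub> qbeta Q op u \<in> qbeta Q op ` Q"
proof -
  interpret G: group "BijGroup Q" by (rule group_BG)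
  have "x \<in> (\<lambda>x. op x u) ` Q" using rbij[OF u] x by (simp add: bij_betw_def)
  then obtain x' where x': "x' \<in> Q" "op x' u = x" by auto
  have h: "qbeta Q op u \<otimes>\<^bsub>BijGroup Q\<^esub> qbeta Q op x' = qbeta Q op x \<otimes>\<^bsub>BijGroup Q\<^esub> qbeta Q op u"
    using beta_mult[OF u x'(1)] x' by simp
  note c = beta_carr[OF u] beta_carr[OF x] beta_carr[OF x'(1)]
  have "inv\<^bsub>BijGroup Q\<^esub> qbeta Q op u \<otimes>\<^bsub>BijGroup Q\<^esub> qbeta Q op x \<otimes>\<^bsub>BijGroup Q\<^esub> qbeta Q op u = qbeta Q op x'"
    using c by (simp add: G.m_assoc h[symmetric] del: inv_BijGroup)
  thus ?thesis using x' by auto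
qed

lemma beta_med': assumes x: "x \<in> Q" and y: "y \<in> Q" and z: "z \<in> Q"
  shows "qbeta Q op x \<otimes>\<^bsub>BijGroup Q\<^esub> inv\<^bsub>BijGroup Q\<^esub> qbeta Q op y \<otimes>\<^bsub>BijGroup Q\<^esub> qbeta Q op z
       = qbeta Q op z \<otimes>\<^bsub>BijGroup Q\<^esub> inv\<^bsub>BijGroup Q\<^esub> qbeta Q op y \<otimes>\<^bsub>BijGroup Q\<^esub> qbeta Q op x"
proof -
  interpret G: group "BijGroup Q" by (rule group_BG)
  note c = beta_carr[OF x] beta_carr[OF y] beta_carr[OF z]
  have e1: "qbeta Q op y \<otimes>\<^bsub>BijGroup Q\<^esub> (qbeta Q op x \<otimes>\<^bsub>BijGroup Q\<^esub> inv\<^bsub>BijGroup Q\<^esub> qbeta Q op y \<otimes>\<^bsub>BijGroup Q\<^esub> qbeta Q op z)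
     = qbeta Q op (op x y) \<otimes>\<^bsub>BijGroup Q\<^esub> qbeta Q op z"
    using c by (simp add: beta_conj[OF y x, symmetric] G.m_assoc del: inv_BijGroup)
  have e2: "qbeta Q op y \<otimes>\<^bsub>BijGroup Q\<^esub> (qbeta Q op z \<otimes>\<^bsub>BijGroup Q\<^esub> inv\<^bsub>BijGroup Q\<^esub> qbeta Q op y \<otimes>\<^bsub>BijGroup Q\<^esub> qbeta Q op x)
     = qbeta Q op (op z y) \<otimes>\<^bsub>BijGroup Q\<^esub> qbeta Q op x"
    using c by (simp add: beta_conj[OF y z, symmetric] G.m_assoc del: inv_BijGroup)
  have "qbeta Q op y \<otimes>\<^bsub>BijGroup Q\<^esub> (qbeta Q op x \<otimes>\<^bsub>BijGroup Q\<^esub> inv\<^bsub>BijGroup Q\<^esub> qbeta Q op y \<otimes>\<^bsub>BijGroup Q\<^esub> qbeta Q op z)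
     = qbeta Q op y \<otimes>\<^bsub>BijGroup Q\<^esub> (qbeta Q op z \<otimes>\<^bsub>BijGroup Q\<^esub> inv\<^bsub>BijGroup Q\<^esub> qbeta Q op y \<otimes>\<^bsub>BijGroup Q\<^esub> qbeta Q op x)"
    unfolding e1 e2 by (rule beta_med[OF z x y])
  moreover have "qbeta Q op x \<otimes>\<^bsub>BijGroup Q\<^esub> inv\<^bsub>BijGroup Q\<^esub> qbeta Q op y \<otimes>\<^bsub>BijGroup Q\<^esub> qbeta Q op z \<in> carrier (BijGroup Q)"
    "qbeta Q op z \<otimes>\<^bsub>BijGroup Q\<^esub> inv\<^bsub>BijGroup Q\<^esub> qbeta Q op y \<otimes>\<^bsub>BijGroup Q\<^esub> qbeta Q op x \<in> carrier (BijGroup Q)"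
    using c by (simp_all del: inv_BijGroup)
  ultimately show ?thesis using G.l_cancel c(2) by blast
qed

lemma disgrp_inst: assumes a0: "a0 \<in> Q" shows "disgrp (BijGroup Q) (qbeta Q op ` Q) (qbeta Q op a0)"
proof (rule disgrp.intro[OF group_BG], rule disgrp_axioms.intro)
  show "qbeta Q op ` Q \<subseteq> carrier (BijGroup Q)" using beta_carr by auto
  show "qbeta Q op a0 \<in> qbeta Q op ` Q" using a0 by simp
  show "u \<otimes>\<^bsub>BijGroup Q\<^esub> x \<otimes>\<^bsub>BijGroup Q\<^esub> inv\<^bsub>BijGroup Q\<^esub> u \<in> qbeta Q op ` Q"
    if as: "u \<in> qbeta Q op ` Q" "x \<in> qbeta Q op ` Q" for u x
  proof -
    obtain y z where "y \<in> Q" "z \<in> Q" "u = qbeta Q op y" "x = qbeta Q op z" using as by auto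
    thus ?thesis using beta_conj closed by auto
  qed
  show "inv\<^bsub>BijGroup Q\<^esub> u \<otimes>\<^bsub>BijGroup Q\<^esub> x \<otimes>\<^bsub>BijGroup Q\<^esub> u \<in> qbeta Q op ` Q"
    if as: "u \<in> qbeta Q op ` Q" "x \<in> qbeta Q op ` Q" for u x
  proof -
    obtain y z where "y \<in> Q" "z \<in> Q" "u = qbeta Q op y" "x = qbeta Q op z" using as by auto
    thus ?thesis using beta_conj' by auto
  qed
  show "x \<otimes>\<^bsub>BijGroup Q\<^esub> inv\<^bsub>BijGroup Q\<^esub> y \<otimes>\<^bsub>BijGroup Q\<^esub> z = z \<otimes>\<^bsub>BijGroup Q\<^esub> inv\<^bsub>BijGroup Q\<^esub> y \<otimes>\<^bsub>BijGroup Q\<^esub> x"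
    if as: "x \<in> qbeta Q op ` Q" "y \<in> qbeta Q op ` Q" "z \<in> qbeta Q op ` Q" for x y z
  proof -
    obtain p q r where "p \<in> Q" "q \<in> Q" "r \<in> Q" "x = qbeta Q op p" "y = qbeta Q op q" "z = qbeta Q op r"
      using as by auto
    thus ?thesis using beta_med' by auto
  qed
qed

end



theorem proposition29:
  fixes A :: "'a set" and C :: "('a \<times> 'a \<times> 'a) set" and astar :: 'a
  assumes "diagram A C" and "astar \<in> A"
  defines "Q \<equiv> MQ A C" and "G \<equiv> BijGroup (MQ A C)"
  defines "\<beta> \<equiv> (\<lambda>a. qbeta (MQ A C) (MQ_op A C) (arc_elem A C a))"
  defines "d \<equiv> (\<lambda>a. \<beta> a \<otimes>\<^bsub>G\<^esub> inv\<^bsub>G\<^esub> (\<beta> astar))"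
  shows "\<exists>sm. module Lambda (DisMod Q (MQ_op A C) sm)
     \<and> (\<forall>m::int. \<forall>x \<in> Dis Q (MQ_op A C). sm (of_int m) x = x [^]\<^bsub>G\<^esub> m)
     \<and> (\<forall>n::int. \<forall>x \<in> Dis Q (MQ_op A C).
          sm (fls_X_intpow n) x = (\<beta> astar [^]\<^bsub>G\<^esub> n) \<otimes>\<^bsub>G\<^esub> x \<otimes>\<^bsub>G\<^esub> inv\<^bsub>G\<^esub> (\<beta> astar [^]\<^bsub>G\<^esub> n))
     \<and> (\<forall>(a1, a2, a3) \<in> C.
          (sm (1 - fls_X) (d a1) \<oplus>\<^bsub>DisMod Q (MQ_op A C) sm\<^esub> sm fls_X (d a2))
            \<ominus>\<^bsub>DisMod Q (MQ_op A C) sm\<^esub> d a3 = \<zero>\<^bsub>DisMod Q (MQ_op A C) sm\<^esub>)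
     \<and> (\<forall>N. submodule N Lambda (DisMod Q (MQ_op A C) sm) \<and> d ` A \<subseteq> N
          \<longrightarrow> Dis Q (MQ_op A C) \<subseteq> N)"
proof -
  have mq: "medq (MQ A C) (MQ_op A C)"
  proof (rule medq.intro)
    fix x y assume xy: "x \<in> MQ A C" "y \<in> MQ A C"
    show "MQ_op A C x y \<in> MQ A C" by (rule MQ_closed[OF xy])
  next
    fix y assume y: "y \<in> MQ A C"
    show "bij_betw (\<lambda>x. MQ_op A C x y) (MQ A C) (MQ A C)" by (rule MQ_bij[OF y])
  next
    fix x y z assume xyz: "x \<in> MQ A C" "y \<in> MQ A C" "z \<in> MQ A C"
    show "MQ_op A C (MQ_op A C x y) z = MQ_op A C (MQ_op A C x z) (MQ_op A C y z)" by (rule MQ_distr[OF xyz])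
  next
    fix w x y z assume wxyz: "w \<in> MQ A C" "x \<in> MQ A C" "y \<in> MQ A C" "z \<in> MQ A C"
    show "MQ_op A C (MQ_op A C w x) (MQ_op A C y z) = MQ_op A C (MQ_op A C w y) (MQ_op A C x z)"
      by (rule MQ_medial[OF wxyz])
  qed
  have arcQ: "\<And>a. a \<in> A \<Longrightarrow> arc_elem A C a \<in> MQ A C"
    by (simp add: arc_elem_def)
  have CA: "C \<subseteq> A \<times> A \<times> A" using assms(1) by (simp add: diagram_def)
  interpret D: disgrp "BijGroup (MQ A C)" "qbeta (MQ A C) (MQ_op A C) ` MQ A C"
     "qbeta (MQ A C) (MQ_op A C) (arc_elem A C astar)"
    by (rule medq.disgrp_inst[OF mq arcQ[OF assms(2)]])
  have DDeq: "D.DD = Dis (MQ A C) (MQ_op A C)"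
    unfolding D.DD_def D.gens_def Dis_def
    by (rule arg_cong[where f="generate _"]) auto
  have ModEq: "DisMod (MQ A C) (MQ_op A C) D.sm = D.DMod"
    by (simp add: DisMod_def D.DMod_def DDeq)
  have dEq: "\<And>a. d a = D.dd (\<beta> a)"
    by (simp add: d_def D.dd_def G_def \<beta>_def)
  have \<beta>B: "\<And>a. a \<in> A \<Longrightarrow> \<beta> a \<in> qbeta (MQ A C) (MQ_op A C) ` MQ A C"
    using arcQ by (simp add: \<beta>_def)
  have bstar: "\<beta> astar = qbeta (MQ A C) (MQ_op A C) (arc_elem A C astar)"
    by (simp add: \<beta>_def)
  have P1: "module Lambda (DisMod Q (MQ_op A C) D.sm)"
    using D.module_DMod ModEq by (simp add: Q_def)
  have P2: "\<forall>m::int. \<forall>x \<in> Dis Q (MQ_op A C). D.sm (of_int m) x = x [^]\<^bsub>G\<^esub> m"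
  proof (intro allI ballI)
    fix m :: int and x assume x: "x \<in> Dis Q (MQ_op A C)"
    hence xD: "x \<in> D.DD" using DDeq by (simp add: Q_def)
    have "(of_int m :: int fls) = lmono m 0" by (simp add: fls_eq_iff fls_of_int_nth)
    thus "D.sm (of_int m) x = x [^]\<^bsub>G\<^esub> m" using xD by (simp add: D.sm_mono G_def)
  qed
  have P3: "\<forall>n::int. \<forall>x \<in> Dis Q (MQ_op A C).
          D.sm (fls_X_intpow n) x = (\<beta> astar [^]\<^bsub>G\<^esub> n) \<otimes>\<^bsub>G\<^esub> x \<otimes>\<^bsub>G\<^esub> inv\<^bsub>G\<^esub> (\<beta> astar [^]\<^bsub>G\<^esub> n)"
  proof (intro allI ballI)
    fix n :: int and x assume x: "x \<in> Dis Q (MQ_op A C)"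
    hence xD: "x \<in> D.DD" using DDeq by (simp add: Q_def)
    have "(fls_X_intpow n :: int fls) = lmono 1 n" by (simp add: fls_eq_iff)
    hence "D.sm (fls_X_intpow n) x = D.ph n x" using xD by (simp add: D.sm_mono)
    thus "D.sm (fls_X_intpow n) x = (\<beta> astar [^]\<^bsub>G\<^esub> n) \<otimes>\<^bsub>G\<^esub> x \<otimes>\<^bsub>G\<^esub> inv\<^bsub>G\<^esub> (\<beta> astar [^]\<^bsub>G\<^esub> n)"
      by (simp add: D.ph_def G_def bstar)
  qed
  have P4: "\<forall>(a1, a2, a3) \<in> C.
          (D.sm (1 - fls_X) (d a1) \<oplus>\<^bsub>DisMod Q (MQ_op A C) D.sm\<^esub> D.sm fls_X (d a2))
            \<ominus>\<^bsub>DisMod Q (MQ_op A C) D.sm\<^esub> d a3 = \<zero>\<^bsub>DisMod Q (MQ_op A C) D.sm\<^esub>"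
  proof (intro ballI, clarify)
    fix a1 a2 a3 assume c: "(a1, a2, a3) \<in> C"
    hence a: "a1 \<in> A" "a2 \<in> A" "a3 \<in> A" using CA by auto
    have "(Op (Gen a2) (Gen a1), Gen a3) \<in> mq_rel A C" using c a by (rule mq_rel.crossing)
    hence "MQ_op A C (arc_elem A C a2) (arc_elem A C a1) = arc_elem A C a3"
      using a by (simp add: arc_elem_def MQ_op_cls cls_eq)
    hence u3: "\<beta> a3 = \<beta> a1 \<otimes>\<^bsub>BijGroup (MQ A C)\<^esub> \<beta> a2 \<otimes>\<^bsub>BijGroup (MQ A C)\<^esub> inv\<^bsub>BijGroup (MQ A C)\<^esub> \<beta> a1"
      using medq.beta_conj[OF mq arcQ[OF a(1)] arcQ[OF a(2)]] by (simp add: \<beta>_def)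
    show "(D.sm (1 - fls_X) (d a1) \<oplus>\<^bsub>DisMod Q (MQ_op A C) D.sm\<^esub> D.sm fls_X (d a2))
            \<ominus>\<^bsub>DisMod Q (MQ_op A C) D.sm\<^esub> d a3 = \<zero>\<^bsub>DisMod Q (MQ_op A C) D.sm\<^esub>"
      using D.crossing_abs[OF \<beta>B[OF a(1)] \<beta>B[OF a(2)] u3] by (simp add: dEq ModEq Q_def)
  qed
  have P5: "\<forall>N. submodule N Lambda (DisMod Q (MQ_op A C) D.sm) \<and> d ` A \<subseteq> N
          \<longrightarrow> Dis Q (MQ_op A C) \<subseteq> N"
  proof (intro allI impI, elim conjE)
    fix N assume N0: "submodule N Lambda (DisMod Q (MQ_op A C) D.sm)" and dA: "d ` A \<subseteq> N"
    have N: "submodule N Lambda D.DMod" using N0 ModEq by (simp add: Q_def)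
    let ?b = "qbeta (MQ A C) (MQ_op A C)"
    let ?c = "\<lambda>t. mq_rel A C `` {t}"
    have gB: "\<And>t. t \<in> qterms A \<Longrightarrow> ?b (?c t) \<in> ?b ` MQ A C" by simp
    have key: "t \<in> qterms A \<Longrightarrow> D.dd (?b (?c t)) \<in> N" for t
    proof (induction t)
      case (Gen a)
      hence "a \<in> A" by simp
      hence "d a \<in> N" using dA by auto
      thus ?case by (simp add: dEq \<beta>_def arc_elem_def)
    next
      case (Op t1 t2)
      hence t: "t1 \<in> qterms A" "t2 \<in> qterms A" by auto
      have "?b (?c (Op t1 t2)) = ?b (MQ_op A C (?c t1) (?c t2))" using t by (simp add: MQ_op_cls)
      also have "\<dots> = ?b (?c t2) \<otimes>\<^bsub>BijGroup (MQ A C)\<^esub> ?b (?c t1) \<otimes>\<^bsub>BijGroup (MQ A C)\<^esub> inv\<^bsub>BijGroup (MQ A C)\<^esub> ?b (?c t2)"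
        using medq.beta_conj[OF mq cls_MQ[OF t(2)] cls_MQ[OF t(1)]] by simp
      finally show ?case using D.dd_conj(1)[OF N gB[OF t(1)] gB[OF t(2)]] Op t by simp
    next
      case (LOp t1 t2)
      hence t: "t1 \<in> qterms A" "t2 \<in> qterms A" by auto
      have L: "?c (LOp t1 t2) \<in> MQ A C" using t by simp
      have "?b (?c t1) = ?b (MQ_op A C (?c (LOp t1 t2)) (?c t2))" using t by (simp add: MQ_LOp)
      also have "\<dots> = ?b (?c t2) \<otimes>\<^bsub>BijGroup (MQ A C)\<^esub> ?b (?c (LOp t1 t2)) \<otimes>\<^bsub>BijGroup (MQ A C)\<^esub> inv\<^bsub>BijGroup (MQ A C)\<^esub> ?b (?c t2)"
        using medq.beta_conj[OF mq cls_MQ[OF t(2)] L] by simp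
      finally have e: "?b (?c t1) = ?b (?c t2) \<otimes>\<^bsub>BijGroup (MQ A C)\<^esub> ?b (?c (LOp t1 t2)) \<otimes>\<^bsub>BijGroup (MQ A C)\<^esub> inv\<^bsub>BijGroup (MQ A C)\<^esub> ?b (?c t2)" .
      have cc: "?b (?c t2) \<in> carrier (BijGroup (MQ A C))" "?b (?c (LOp t1 t2)) \<in> carrier (BijGroup (MQ A C))"
        using medq.beta_carr[OF mq] t L by auto
      have "?b (?c (LOp t1 t2)) = inv\<^bsub>BijGroup (MQ A C)\<^esub> ?b (?c t2) \<otimes>\<^bsub>BijGroup (MQ A C)\<^esub> ?b (?c t1) \<otimes>\<^bsub>BijGroup (MQ A C)\<^esub> ?b (?c t2)"
        using cc by (simp add: e D.m_assoc del: inv_BijGroup)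
      thus ?case using D.dd_conj(2)[OF N gB[OF t(1)] gB[OF t(2)]] LOp t by simp
    qed
    have "D.DD \<subseteq> N"
    proof (rule D.gen_N[OF N])
      fix u assume "u \<in> ?b ` MQ A C"
      then obtain U where U: "U \<in> MQ A C" "u = ?b U" by auto
      then obtain t where "t \<in> qterms A" "U = ?c t" by (auto simp: MQ_iff)
      thus "D.dd u \<in> N" using key U by simp
    qed
    thus "Dis Q (MQ_op A C) \<subseteq> N" using DDeq by (simp add: Q_def)
  qed
  show ?thesis using P1 P2 P3 P4 P5 by blast
qed


end
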